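(* Let $a,b,k$ be integers with $4k^2 < a < b-k$. Let $G$ be a graph obtained from the complete bipartite graph $K_{a,b}$ by removing the edges of $k$ forests (each a subgraph of $K_{a,b}$). Then $G$ contains a matching of size $a-k$. *)

theory Defs
  imports Main
begin

text \<open>Simple undirected graphs are given by edge sets: each edge is a 2-element set of vertices.\<close>

definition complete_bipartite :: "'a set \<Rightarrow> 'a set \<Rightarrow> 'a set set" where
  "complete_bipartite A B = {{x, y} | x y. x \<in> A \<and> y \<in> B}"

definition is_cycle :: "'a set set \<Rightarrow> 'a list \<Rightarrow> bool" where
  "is_cycle E vs \<longleftrightarrow> length vs \<ge> 3 \<and> distinct vs \<and>
     (\<forall>i < length vs. {vs ! i, vs ! ((i + 1) mod length vs)} \<in> E)"

definition forest :: "'a set set \<Rightarrow> bool" where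
  "forest E \<longleftrightarrow> \<not> (\<exists>vs. is_cycle E vs)"

definition matching :: "'a set set \<Rightarrow> bool" where
  "matching M \<longleftrightarrow> (\<forall>e \<in> M. \<forall>e' \<in> M. e \<noteq> e' \<longrightarrow> e \<inter> e' = {})"

end

theory Submission
  imports Defs
begin

lemma forest_mono: "forest E \<Longrightarrow> E' \<subseteq> E \<Longrightarrow> forest E'"
  unfolding forest_def is_cycle_def by blast

definition isPath :: "'a set set \<Rightarrow> 'a list \<Rightarrow> bool" where
  "isPath E p \<longleftrightarrow> distinct p \<and> (\<forall>i. Suc i < length p \<longrightarrow> {p!i, p!Suc i} \<in> E)"

lemma leaf:
  assumes "finite V" "E \<subseteq> {{x,y}|x y. x\<in>V \<and> y\<in>V \<and> x\<noteq>y}" "forest E" "E \<noteq> {}"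
  shows "\<exists>v\<in>V. card {e\<in>E. v\<in>e} \<le> 1"
proof -
  define P where "P = {p. isPath E p \<and> set p \<subseteq> V}"
  have finP: "finite P"
  proof -
    have "P \<subseteq> {xs. set xs \<subseteq> V \<and> length xs \<le> card V}"
    proof
      fix p assume "p \<in> P"
      then have "distinct p" "set p \<subseteq> V" by (auto simp: P_def isPath_def)
      then show "p \<in> {xs. set xs \<subseteq> V \<and> length xs \<le> card V}"
        using assms(1) by (metis (mono_tags, lifting) card_mono distinct_card mem_Collect_eq)
    qed
    then show ?thesis using finite_lists_length_le[OF assms(1)] finite_subset by blast
  qed
  obtain e where "e \<in> E" using assms(4) by blast
  then obtain x y where xy: "e = {x,y}" "x\<in>V" "y\<in>V" "x\<noteq>y" using assms(2) by blast
  have "[x,y] \<in> P" unfolding P_def isPath_def using xy \<open>e\<in>E\<close>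
    by (auto simp: less_Suc_eq)
  then have "P \<noteq> {}" by blast
  define L where "L = Max (length ` P)"
  have "L \<in> length ` P" unfolding L_def using finP \<open>P \<noteq> {}\<close> by simp
  then obtain p where p1: "p \<in> P" and pL: "length p = L" by blast
  have p2: "\<forall>q\<in>P. length q \<le> length p" using finP pL L_def by simp
  have "length p \<ge> 2" using p2 \<open>[x,y] \<in> P\<close> by fastforce
  then obtain v u rest where pe: "p = v # u # rest"
    by (metis One_nat_def Suc_1 Suc_le_length_iff)
  have pP: "isPath E p" "set p \<subseteq> V" using p1 by (auto simp: P_def)
  have "v \<in> V" using pP pe by auto
  have key: "{e\<in>E. v\<in>e} \<subseteq> {{v,u}}"
  proof
    fix e assume "e \<in> {e\<in>E. v\<in>e}"
    then have eE: "e\<in>E" "v\<in>e" by auto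
    from assms(2) eE(1) obtain a c where ac: "e={a,c}" "a\<in>V" "c\<in>V" "a\<noteq>c" by blast
    obtain w where e: "e = {v,w}" "w\<in>V" "w\<noteq>v" using ac eE(2) by auto
    show "e \<in> {{v,u}}"
    proof (rule ccontr)
      assume ne: "e \<notin> {{v,u}}"
      then have wu: "w \<noteq> u" using e by auto
      show False
      proof (cases "w \<in> set p")
        case False
        have "isPath E (w # p)"
          unfolding isPath_def
        proof (intro conjI allI impI)
          show "distinct (w # p)" using False pP(1) by (simp add: isPath_def)
        next
          fix i assume i: "Suc i < length (w # p)"
          show "{(w # p) ! i, (w # p) ! Suc i} \<in> E"
          proof (cases i)
            case 0
            then show ?thesis using e eE pe by (simp add: insert_commute)
          next
            case (Suc i')
            then show ?thesis using i pP(1) by (simp add: isPath_def)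
          qed
        qed
        then have "w # p \<in> P" using pP e by (auto simp: P_def)
        then show False using p2 by fastforce
      next
        case True
        then obtain j where j: "j < length p" "p!j = w" by (auto simp: in_set_conv_nth)
        have "j \<noteq> 0" using j e pe by (metis nth_Cons_0)
        moreover have "j \<noteq> 1" using j wu pe by auto
        ultimately have j2: "j \<ge> 2" by linarith
        define c where "c = take (Suc j) p"
        have lc: "length c = Suc j" using j c_def by simp
        have "is_cycle E c"
          unfolding is_cycle_def
        proof (intro conjI allI impI)
          show "3 \<le> length c" using lc j2 by simp
          show "distinct c" using pP(1) c_def by (simp add: isPath_def)
        next
          fix i assume i: "i < length c"
          show "{c ! i, c ! ((i + 1) mod length c)} \<in> E"
          proof (cases "i < j")
            case True
            then have "(i+1) mod length c = Suc i" using lc by simp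
            then show ?thesis using True j pP(1) c_def by (simp add: isPath_def)
          next
            case False
            then have "i = j" using i lc by simp
            then have "(i+1) mod length c = 0" using lc by simp
            moreover have "c ! j = w" using j c_def by simp
            moreover have "c ! 0 = v" using c_def pe by simp
            ultimately show ?thesis using \<open>i = j\<close> e eE by (simp add: insert_commute)
          qed
        qed
        then show False using assms(3) by (auto simp: forest_def)
      qed
    qed
  qed
  then have "card {e\<in>E. v\<in>e} \<le> card {{v,u}}" by (intro card_mono) auto
  then show ?thesis using \<open>v\<in>V\<close> by auto
qed

lemma forest_card:
  "finite V \<Longrightarrow> V \<noteq> {} \<Longrightarrow> E \<subseteq> {{x,y}|x y. x\<in>V \<and> y\<in>V \<and> x\<noteq>y} \<Longrightarrow> forest E
    \<Longrightarrow> card E < card V"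
proof (induction "card V" arbitrary: V E rule: less_induct)
  case less
  show ?case
  proof (cases "E = {}")
    case True then show ?thesis using less.prems(1,2) by (simp add: card_gt_0_iff)
  next
    case False
    obtain v where v: "v\<in>V" "card {e\<in>E. v\<in>e} \<le> 1"
      using leaf[OF less.prems(1) less.prems(3) less.prems(4) False] by blast
    define V' where "V' = V - {v}"
    define E' where "E' = {e\<in>E. v\<notin>e}"
    have "E \<subseteq> Pow V" using less.prems(3) by auto
    then have finE: "finite E" using less.prems(1) finite_subset by blast
    have Eu: "E = E' \<union> {e\<in>E. v\<in>e}" unfolding E'_def by blast
    have Esplit: "card E = card E' + card {e\<in>E. v\<in>e}"
    proof -
      have "finite E'" "finite {e\<in>E. v\<in>e}" "E' \<inter> {e\<in>E. v\<in>e} = {}"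
        using finE unfolding E'_def by auto
      then have "card (E' \<union> {e\<in>E. v\<in>e}) = card E' + card {e\<in>E. v\<in>e}"
        by (rule card_Un_disjoint)
      then show ?thesis using arg_cong[OF Eu, of card] by linarith
    qed
    have E'sub: "E' \<subseteq> {{x,y}|x y. x\<in>V' \<and> y\<in>V' \<and> x\<noteq>y}"
      using less.prems(3) unfolding E'_def V'_def by blast
    show ?thesis
    proof (cases "V' = {}")
      case True
      then have "V = {v}" using v V'_def by auto
      obtain e where "e \<in> E" using False by blast
      then obtain x y where "x \<in> V" "y \<in> V" "x \<noteq> y" using less.prems(3) by blast
      then show ?thesis using \<open>V = {v}\<close> by simp
    next
      case False
      have lt: "card V' < card V" using card_Diff1_less[OF less.prems(1) v(1)] V'_def by simp
      have fE': "forest E'" using less.prems(4) by (rule forest_mono) (auto simp: E'_def)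
      have fV': "finite V'" using less.prems(1) V'_def by simp
      have "card E' < card V'"
        using less.hyps[OF lt fV' False E'sub fE'] .
      then show ?thesis using Esplit v lt by linarith
    qed
  qed
qed


lemma memE:
  assumes "e \<in> M" "M \<subseteq> {{x,y}|x y. x\<in>S \<and> y\<in>B \<and> \<not> Bad x y}"
  obtains a c where "e = {a,c}" "a \<in> S" "c \<in> B" "\<not> Bad a c"
  using assms by blast

lemma greedy:
  fixes B S :: "'a set" and Bad :: "'a \<Rightarrow> 'a \<Rightarrow> bool" and j :: nat
  assumes "finite B" "finite S" "S \<inter> B = {}"
    and "\<forall>x\<in>S. card {x'\<in>S. card {y\<in>B. Bad x y} \<le> card {y\<in>B. Bad x' y}} + card {y\<in>B. Bad x y} \<le> card B + j"
  shows "\<exists>M. M \<subseteq> {{x,y}|x y. x\<in>S \<and> y\<in>B \<and> \<not> Bad x y} \<and> matching M \<and> card S \<le> card M + j"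
  using assms(2-4)
proof (induction "card S" arbitrary: S)
  case 0
  then have "S = {}" by simp
  then show ?case by (intro exI[of _ "{}"]) (auto simp: matching_def)
next
  case (Suc n)
  define D where "D x = card {y\<in>B. Bad x y}" for x
  have "S \<noteq> {}" using Suc(2) by auto
  define m where "m = Min (D ` S)"
  have "m \<in> D ` S" unfolding m_def using Suc.prems(1) \<open>S \<noteq> {}\<close> by simp
  then obtain x where x1: "x \<in> S" and xm: "D x = m" by blast
  have x2: "\<forall>x'\<in>S. D x \<le> D x'" using xm m_def Suc.prems(1) by simp
  have all: "{x'\<in>S. D x \<le> D x'} = S" using x2 by auto
  have "card {x'\<in>S. D x \<le> D x'} + D x \<le> card B + j"
    using Suc.prems(3) x1 unfolding D_def by blast
  then have hx: "card S + D x \<le> card B + j" using all by simp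
  define S' where "S' = S - {x}"
  have cS': "n = card S'" using Suc(2) x1 S'_def Suc.prems(1) by simp
  have fS': "finite S'" using Suc.prems(1) S'_def by simp
  have dS': "S' \<inter> B = {}" using Suc.prems(2) S'_def by auto
  have condS': "\<forall>x\<in>S'. card {x'\<in>S'. card {y\<in>B. Bad x y} \<le> card {y\<in>B. Bad x' y}} + card {y\<in>B. Bad x y} \<le> card B + j"
  proof
    fix z assume z: "z \<in> S'"
    have "card {x'\<in>S'. card {y\<in>B. Bad z y} \<le> card {y\<in>B. Bad x' y}} \<le> card {x'\<in>S. card {y\<in>B. Bad z y} \<le> card {y\<in>B. Bad x' y}}"
      by (rule card_mono) (use Suc.prems(1) S'_def in auto)
    moreover have "z \<in> S" using z S'_def by simp
    ultimately show "card {x'\<in>S'. card {y\<in>B. Bad z y} \<le> card {y\<in>B. Bad x' y}} + card {y\<in>B. Bad z y} \<le> card B + j"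
      using Suc.prems(3) by fastforce
  qed
  have "\<exists>M. M \<subseteq> {{x,y}|x y. x\<in>S' \<and> y\<in>B \<and> \<not> Bad x y} \<and> matching M \<and> card S' \<le> card M + j"
    by (rule Suc.hyps(1)[OF cS' fS' dS' condS'])
  then obtain M' where M': "M' \<subseteq> {{x,y}|x y. x\<in>S' \<and> y\<in>B \<and> \<not> Bad x y} \<and> matching M' \<and> card S' \<le> card M' + j"
    by (rule exE)
  have M'1: "M' \<subseteq> {{x,y}|x y. x\<in>S' \<and> y\<in>B \<and> \<not> Bad x y}" using M' by (rule conjunct1)
  have M'2: "matching M'" using M' by simp
  have M'3: "card S' \<le> card M' + j" using M' by simp
  have sub: "{{x,y}|x y. x\<in>S' \<and> y\<in>B \<and> \<not> Bad x y} \<subseteq> {{x,y}|x y. x\<in>S \<and> y\<in>B \<and> \<not> Bad x y}"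
    by (auto simp: S'_def)
  show ?case
  proof (cases "card S \<le> card M' + j")
    case True
    show ?thesis by (rule exI[of _ M'], intro conjI order_trans[OF M'1 sub] M'2 True)
  next
    case False
    have cS: "card S = Suc (card S')" using cS' Suc(2) by simp
    have cM': "card M' + j + 1 = card S" using False M'3 cS by linarith
    have "M' \<subseteq> Pow (S \<union> B)" using M'1 S'_def by auto
    then have finM': "finite M'" using Suc.prems(1) assms(1) finite_subset by blast
    define U where "U = \<Union>M' \<inter> B"
    have "U \<subseteq> (\<Union>e\<in>M'. e \<inter> B)" unfolding U_def by blast
    moreover have "finite (\<Union>e\<in>M'. e \<inter> B)" by (rule finite_subset[OF _ assms(1)]) auto
    ultimately have "card U \<le> card (\<Union>e\<in>M'. e \<inter> B)"
      by (intro card_mono)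
    also have "\<dots> \<le> (\<Sum>e\<in>M'. card (e \<inter> B))" by (rule card_UN_le[OF finM'])
    also have "\<dots> \<le> (\<Sum>e\<in>M'. 1)"
    proof (rule sum_mono)
      fix e assume "e \<in> M'"
      then obtain a c where ac: "e = {a,c}" "a \<in> S'" "c \<in> B" using M'1 by (rule memE)
      then have "a \<notin> B" using dS' by auto
      then have "e \<inter> B = {c}" using ac by auto
      then show "card (e \<inter> B) \<le> 1" by simp
    qed
    finally have cU: "card U \<le> card M'" by simp
    define X where "X = {y\<in>B. \<not> Bad x y} - U"
    have "{y\<in>B. \<not> Bad x y} = B - {y\<in>B. Bad x y}" by auto
    then have c1: "card {y\<in>B. \<not> Bad x y} = card B - D x"
      unfolding D_def using assms(1) by (simp add: card_Diff_subset)
    have "card {y\<in>B. \<not> Bad x y} - card U \<le> card X"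
      unfolding X_def by (rule diff_card_le_card_Diff) (unfold U_def, rule finite_Int[OF disjI2[OF assms(1)]])
    then have "card X > 0" using c1 cU hx cM' by linarith
    then obtain y where y: "y \<in> X" by (metis card_gt_0_iff equals0I)
    then have yB: "y \<in> B" and yBad: "\<not> Bad x y" and yU: "y \<notin> \<Union>M'"
      unfolding X_def U_def by auto
    have xB: "x \<notin> B" using x1 Suc.prems(2) by auto
    have xM: "x \<notin> \<Union>M'"
    proof
      assume "x \<in> \<Union>M'"
      then obtain e where "e \<in> M'" "x \<in> e" by blast
      then obtain a c where "e = {a,c}" "a \<in> S'" "c \<in> B" using M'1 by (auto elim: memE)
      then show False using \<open>x \<in> e\<close> xB S'_def by auto
    qed
    define M where "M = insert {x,y} M'"
    have "M \<subseteq> {{x,y}|x y. x\<in>S \<and> y\<in>B \<and> \<not> Bad x y}"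
    proof -
      have "{x,y} \<in> {{x,y}|x y. x\<in>S \<and> y\<in>B \<and> \<not> Bad x y}" using x1 yB yBad by auto
      then show ?thesis unfolding M_def using order_trans[OF M'1 sub] by (simp only: insert_subset)
    qed
    moreover have "matching M"
    proof -
      have dis: "{x,y} \<inter> e = {}" if "e \<in> M'" for e
      proof -
        obtain a c where ac: "e = {a,c}" "a \<in> S'" "c \<in> B" using \<open>e \<in> M'\<close> M'1 by (rule memE)
        have "x \<notin> e" using xM \<open>e \<in> M'\<close> by blast
        moreover have "y \<notin> e" using yU \<open>e \<in> M'\<close> by blast
        ultimately show ?thesis by auto
      qed
      show ?thesis using M'2 dis unfolding M_def matching_def by (auto simp: Int_commute)
    qed
    moreover have "card M = card M' + 1"
    proof -
      have "{x,y} \<notin> M'" using xM by blast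
      then show ?thesis unfolding M_def using finM' by simp
    qed
    ultimately show ?thesis using cM' by (intro exI[of _ M]) simp
  qed
qed

lemma arith_key:
  fixes s T k a b :: nat
  assumes "1 \<le> s" "s \<le> a" "a + k < b" "4*k^2 < a" "T \<le> b" "s*T \<le> k*(s+b-1)"
  shows "s + T \<le> b + k"
proof (rule ccontr)
  assume "\<not> ?thesis"
  then have T: "b + k + 1 \<le> s + T" by simp
  have "k + 1 \<le> s" using T assms(5) by linarith
  then obtain u where u: "s = k + 1 + u" using le_Suc_ex by (metis add.commute)
  have "s \<le> b - k - 1" using assms(2,3) by linarith
  then obtain v where v: "b = s + k + 1 + v" using assms(2,3)
    by (metis add.commute add_Suc_right le_Suc_ex Nat.le_diff_conv2 less_imp_le_nat plus_1_eq_Suc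
        Suc_leI add_leD1 diff_add le_diff_conv)
  have T2: "2*k + 2 + v \<le> T" using T u v by linarith
  have "s * (2*k+2+v) \<le> s * T" using T2 by (rule mult_le_mono2)
  also have "\<dots> \<le> k*(s+b-1)" by (rule assms(6))
  finally have ineq: "(k+1+u) * (2*k+2+v) \<le> k*(3*k+2+2*u+v)"
    using u v by (simp add: algebra_simps)
  have "4*k^2 < 2*k+2+u+v" using assms(3,4) u v by linarith
  then have "k*k*4 < 2*k+2+u+v" by (simp add: power2_eq_square algebra_simps)
  moreover have "0 \<le> u*v" by simp
  ultimately show False using ineq by (simp add: algebra_simps)
qed


theorem claim10:
  fixes A B :: "'a set" and k :: nat and F :: "nat \<Rightarrow> 'a set set"
  assumes "finite A" and "finite B" and "A \<inter> B = {}"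
    and "4 * k ^ 2 < card A" and "card A + k < card B"
    and "\<forall>i < k. F i \<subseteq> complete_bipartite A B \<and> forest (F i)"
  shows "\<exists>M. M \<subseteq> complete_bipartite A B - (\<Union>i<k. F i) \<and> matching M \<and> card M = card A - k"
proof -
  define Bad where "Bad x y \<longleftrightarrow> (\<exists>i<k. {x,y} \<in> F i)" for x y
  define D where "D x = card {y\<in>B. Bad x y}" for x
  have cond: "\<forall>x\<in>A. card {x'\<in>A. D x \<le> D x'} + D x \<le> card B + k"
  proof
    fix x assume xA: "x \<in> A"
    define T where "T = D x"
    define S where "S = {x'\<in>A. T \<le> D x'}"
    have SA: "S \<subseteq> A" by (auto simp: S_def)
    have finS: "finite S" by (rule finite_subset[OF SA assms(1)])
    have "x \<in> S" by (simp add: S_def T_def xA)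
    then have s1: "1 \<le> card S" using finS by (auto simp: Suc_le_eq card_gt_0_iff)
    have sa: "card S \<le> card A" by (rule card_mono[OF assms(1) SA])
    have TB: "T \<le> card B" unfolding T_def D_def by (rule card_mono[OF assms(2)]) auto
    have "of_nat (card S) * T \<le> sum D S" by (rule sum_bounded_below) (simp add: S_def)
    then have low: "card S * T \<le> (\<Sum>x'\<in>S. D x')" by simp
    define P where "P i = {(x',y). x'\<in>S \<and> y\<in>B \<and> {x',y} \<in> F i}" for i
    have sig: "(\<Sum>x'\<in>S. D x') = card (Sigma S (\<lambda>x'. {y\<in>B. Bad x' y}))"
      unfolding D_def by (rule card_SigmaI[symmetric]) (use finS assms(2) in auto)
    have sigeq: "Sigma S (\<lambda>x'. {y\<in>B. Bad x' y}) = (\<Union>i\<in>{..<k}. P i)"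
      by (auto simp: P_def Bad_def)
    have each: "card (P i) + 1 \<le> card S + card B" if ik: "i < k" for i
    proof -
      have Fi: "F i \<subseteq> complete_bipartite A B" "forest (F i)" using assms(6) ik by auto
      define Ei where "Ei = {e\<in>F i. e \<inter> S \<noteq> {}}"
      have fEi: "forest Ei" using Fi(2) by (rule forest_mono) (auto simp: Ei_def)
      have subE: "Ei \<subseteq> {{u,w}|u w. u\<in>S\<union>B \<and> w\<in>S\<union>B \<and> u\<noteq>w}"
      proof
        fix e assume "e \<in> Ei"
        then have eF: "e \<in> F i" and eS: "e \<inter> S \<noteq> {}" by (auto simp: Ei_def)
        have "e \<in> complete_bipartite A B" using eF Fi(1) by (rule rev_subsetD)
        then obtain u w where uw: "e = {u,w}" "u\<in>A" "w\<in>B" unfolding complete_bipartite_def by auto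
        have "u \<noteq> w" using uw assms(3) by auto
        moreover have "u \<in> S" using eS uw SA assms(3) by auto
        ultimately show "e \<in> {{u,w}|u w. u\<in>S\<union>B \<and> w\<in>S\<union>B \<and> u\<noteq>w}" using uw by auto
      qed
      have fin: "finite (S \<union> B)" using finS assms(2) by simp
      have ne: "S \<union> B \<noteq> {}" using \<open>x \<in> S\<close> by auto
      have c1: "card Ei < card (S \<union> B)" by (rule forest_card[OF fin ne subE fEi])
      have c2: "card (S \<union> B) = card S + card B"
        by (rule card_Un_disjoint[OF finS assms(2)]) (use SA assms(3) in auto)
      have "Ei \<subseteq> Pow (S \<union> B)" using subE by auto
      then have finE: "finite Ei" using fin by (simp add: finite_subset)
      have c3: "card (P i) \<le> card Ei"
      proof (rule card_inj_on_le[OF _ _ finE])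
        show "inj_on (\<lambda>(u,w). {u,w}) (P i)"
          unfolding inj_on_def P_def using SA assms(3) by (auto simp: doubleton_eq_iff)
        show "(\<lambda>(u,w). {u,w}) ` P i \<subseteq> Ei" unfolding P_def Ei_def by auto
      qed
      show ?thesis using c1 c2 c3 by linarith
    qed
    have "card (\<Union>i\<in>{..<k}. P i) \<le> (\<Sum>i<k. card (P i))" by (rule card_UN_le) simp
    also have "\<dots> \<le> (\<Sum>i<k. card S + card B - 1)"
    proof (rule sum_mono)
      fix i assume "i \<in> {..<k}"
      then have "card (P i) + 1 \<le> card S + card B" using each by simp
      then show "card (P i) \<le> card S + card B - 1" by linarith
    qed
    also have "\<dots> = k * (card S + card B - 1)" by simp
    finally have up: "card (\<Union>i\<in>{..<k}. P i) \<le> k * (card S + card B - 1)" .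
    have "card S * T \<le> k * (card S + card B - 1)" using low sig sigeq up by simp
    then have "card S + T \<le> card B + k" by (rule arith_key[OF s1 sa assms(5) assms(4) TB])
    then show "card {x'\<in>A. D x \<le> D x'} + D x \<le> card B + k" using S_def T_def by simp
  qed
  have "\<exists>M. M \<subseteq> {{x,y}|x y. x\<in>A \<and> y\<in>B \<and> \<not> Bad x y} \<and> matching M \<and> card A \<le> card M + k"
    by (rule greedy[OF assms(2) assms(1) assms(3)]) (use cond in \<open>simp add: D_def\<close>)
  then obtain M where M: "M \<subseteq> {{x,y}|x y. x\<in>A \<and> y\<in>B \<and> \<not> Bad x y} \<and> matching M \<and> card A \<le> card M + k"
    by (rule exE)
  have M1: "M \<subseteq> {{x,y}|x y. x\<in>A \<and> y\<in>B \<and> \<not> Bad x y}" using M by (rule conjunct1)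
  have M2: "matching M" using M by simp
  have "card A \<le> card M + k" using M by (elim conjE)
  then have "card A - k \<le> card M" by linarith
  then obtain M0 where M0: "M0 \<subseteq> M" "card M0 = card A - k" by (rule obtain_subset_with_card_n)
  show ?thesis
  proof (intro exI[of _ M0] conjI)
    show "M0 \<subseteq> complete_bipartite A B - (\<Union>i<k. F i)"
    proof
      fix e assume "e \<in> M0"
      then have "e \<in> M" using M0 by blast
      then obtain a c where ac: "e = {a,c}" "a\<in>A" "c\<in>B" "\<not> Bad a c" using M1 by (rule memE)
      then show "e \<in> complete_bipartite A B - (\<Union>i<k. F i)"
        unfolding complete_bipartite_def Bad_def by auto
    qed
    show "matching M0" using M2 M0(1) unfolding matching_def by blast
    show "card M0 = card A - k" by (rule M0(2))
  qed
qed

end
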